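(* Assume $\sum_{j=1}^\infty\beta_j^2<\infty$ and $|\rho|<1$, and for $k=1,\dots,p$ let $\theta_k^{(p)}=\sum_{j=1}^p\beta_j\rho^{|k-j|}$. Then, as $p\to\infty$, $$\Big|\sum_{i,j,k=1}^p\big(\rho^{|i-j|}+\theta_i^{(p)}\theta_j^{(p)}\big)\big(\rho^{|i-k|}+\theta_i^{(p)}\theta_k^{(p)}\big)\big(\rho^{|k-j|}+\theta_k^{(p)}\theta_j^{(p)}\big)\Big|=o(p^{3/2}).$$ *)

theory Defs
  imports "HOL-Analysis.Analysis" "HOL-Library.Landau_Symbols"
begin

definition theta :: "(nat \<Rightarrow> real) \<Rightarrow> real \<Rightarrow> nat \<Rightarrow> nat \<Rightarrow> real" where
  "theta \<beta> \<rho> p k = (\<Sum>j=1..p. \<beta> j * \<rho> ^ nat \<bar>int k - int j\<bar>)"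

definition tripleSum :: "(nat \<Rightarrow> real) \<Rightarrow> real \<Rightarrow> nat \<Rightarrow> real" where
  "tripleSum \<beta> \<rho> p = (\<Sum>i=1..p. \<Sum>j=1..p. \<Sum>k=1..p.
     (\<rho> ^ nat \<bar>int i - int j\<bar> + theta \<beta> \<rho> p i * theta \<beta> \<rho> p j) *
     (\<rho> ^ nat \<bar>int i - int k\<bar> + theta \<beta> \<rho> p i * theta \<beta> \<rho> p k) *
     (\<rho> ^ nat \<bar>int k - int j\<bar> + theta \<beta> \<rho> p k * theta \<beta> \<rho> p j))"

end

theory Submission
  imports Defs "HOL-Real_Asymp.Real_Asymp"
begin

lemma amgm: "0 \<le> (M::real) \<Longrightarrow> M * (x * y) \<le> M * ((x^2 + y^2)/2)"
  by (rule mult_left_mono) (use sum_squares_bound[of x y] in auto)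

lemma perm3: "(\<Sum>x\<in>A. \<Sum>y\<in>B. \<Sum>z\<in>C. F x y z) = (\<Sum>z\<in>C. \<Sum>x\<in>A. \<Sum>y\<in>B. F x y z)"
proof -
  have "(\<Sum>x\<in>A. \<Sum>y\<in>B. \<Sum>z\<in>C. F x y z) = (\<Sum>x\<in>A. \<Sum>z\<in>C. \<Sum>y\<in>B. F x y z)"
    by (rule sum.cong[OF refl], rule sum.swap)
  also have "\<dots> = (\<Sum>z\<in>C. \<Sum>x\<in>A. \<Sum>y\<in>B. F x y z)" by (rule sum.swap)
  finally show ?thesis .
qed

lemma row:
  assumes "finite I" "\<And>i j. w i j = w j i" "\<And>i. (\<Sum>j\<in>I. w i j) \<le> (c::real)"
    "\<And>i j. 0 \<le> w i j" "\<And>i. 0 \<le> g i"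
  shows "(\<Sum>a\<in>I. \<Sum>b\<in>I. w a b * g b) \<le> c * (\<Sum>b\<in>I. g b)"
proof -
  have "(\<Sum>a\<in>I. \<Sum>b\<in>I. w a b * g b) = (\<Sum>b\<in>I. g b * (\<Sum>a\<in>I. w b a))"
    by (subst sum.swap) (simp add: sum_distrib_left assms(2) mult.commute)
  also have "\<dots> \<le> (\<Sum>b\<in>I. g b * c)"
    by (rule sum_mono, rule mult_left_mono) (use assms in auto)
  finally show ?thesis by (simp add: sum_distrib_left mult.commute)
qed

lemma tri:
  assumes "finite I" "\<And>i j. w i j = w j i" "\<And>i. (\<Sum>j\<in>I. w i j) \<le> (c::real)"
    "\<And>i j. 0 \<le> w i j" "\<And>i. 0 \<le> g i"
  shows "(\<Sum>x\<in>I. \<Sum>y\<in>I. \<Sum>z\<in>I. w x y * w x z * g z) \<le> c * c * (\<Sum>b\<in>I. g b)"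
proof -
  have "(\<Sum>x\<in>I. \<Sum>y\<in>I. \<Sum>z\<in>I. w x y * w x z * g z)
      = (\<Sum>x\<in>I. (\<Sum>y\<in>I. w x y) * (\<Sum>z\<in>I. w x z * g z))"
    by (simp only: sum_distrib_left sum_distrib_right mult.assoc) (rule sum.cong[OF refl], rule sum.swap)
  also have "\<dots> \<le> (\<Sum>x\<in>I. c * (\<Sum>z\<in>I. w x z * g z))"
    by (rule sum_mono, rule mult_right_mono) (use assms in \<open>auto intro: sum_nonneg\<close>)
  also have "\<dots> = c * (\<Sum>x\<in>I. \<Sum>z\<in>I. w x z * g z)" by (simp add: sum_distrib_left)
  also have "\<dots> \<le> c * (c * (\<Sum>b\<in>I. g b))"
  proof (rule mult_left_mono)
    show "(\<Sum>x\<in>I. \<Sum>z\<in>I. w x z * g z) \<le> c * sum g I" by (rule row) (use assms in auto)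
    have "0 \<le> (\<Sum>j\<in>I. w undefined j)" by (rule sum_nonneg) (use assms in auto)
    then show "0 \<le> c" using assms(3)[of undefined] by linarith
  qed
  finally show ?thesis by simp
qed

lemma one:
  assumes "finite I" "\<And>i j. w i j = w j i" "\<And>i. (\<Sum>j\<in>I. w i j) \<le> (c::real)"
    "\<And>i j. 0 \<le> w i j" "\<And>i. 0 \<le> g i" "(\<Sum>b\<in>I. g b) \<le> T"
  shows "(\<Sum>x\<in>I. \<Sum>y\<in>I. \<Sum>z\<in>I. w x y * g x * g z) \<le> c * T * T"
proof -
  have "(\<Sum>x\<in>I. \<Sum>y\<in>I. \<Sum>z\<in>I. w x y * g x * g z)
      = (\<Sum>x\<in>I. \<Sum>y\<in>I. w x y * g x) * (\<Sum>z\<in>I. g z)"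
    by (simp only: sum_distrib_left sum_distrib_right mult.assoc) (rule perm3)
  also have "\<dots> \<le> (c * T) * T"
  proof (rule mult_mono)
    have "(\<Sum>x\<in>I. \<Sum>y\<in>I. w x y * g x) = (\<Sum>y\<in>I. \<Sum>x\<in>I. w y x * g x)" by (subst sum.swap) (simp add: assms(2))
    also have "\<dots> \<le> c * sum g I" by (rule row) (use assms in auto)
    also have "\<dots> \<le> c * T"
    proof (rule mult_left_mono)
      have "0 \<le> (\<Sum>j\<in>I. w undefined j)" by (rule sum_nonneg) (use assms in auto)
      then show "0 \<le> c" using assms(3)[of undefined] by linarith
    qed (use assms in auto)
    finally show "(\<Sum>x\<in>I. \<Sum>y\<in>I. w x y * g x) \<le> c * T" .
    have T0: "0 \<le> T" using assms(6) sum_nonneg[of I g] assms(5) by (meson order.trans)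
    have "0 \<le> (\<Sum>j\<in>I. w undefined j)" by (rule sum_nonneg) (use assms in auto)
    then have "0 \<le> c" using assms(3)[of undefined] by linarith
    then show "0 \<le> c * T" using T0 by simp
  qed (use assms in \<open>auto intro!: sum_nonneg mult_nonneg_nonneg\<close>)
  finally show ?thesis by simp
qed


lemma p_ikj: "(\<Sum>i\<in>I. \<Sum>j\<in>I. \<Sum>k\<in>I. F i k j) = (\<Sum>i\<in>I. \<Sum>j\<in>I. \<Sum>k\<in>I. F i j k)"
  by (rule sum.cong[OF refl], rule sum.swap)
lemma p_jik: "(\<Sum>i\<in>I. \<Sum>j\<in>I. \<Sum>k\<in>I. F j i k) = (\<Sum>i\<in>I. \<Sum>j\<in>I. \<Sum>k\<in>I. F i j k)"
  by (rule sum.swap)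
lemma p_kij: "(\<Sum>i\<in>I. \<Sum>j\<in>I. \<Sum>k\<in>I. F k i j) = (\<Sum>i\<in>I. \<Sum>j\<in>I. \<Sum>k\<in>I. F i j k)"
  using perm3[of "\<lambda>x y z. F z x y" I I I] by simp
lemma p_jki: "(\<Sum>i\<in>I. \<Sum>j\<in>I. \<Sum>k\<in>I. F j k i) = (\<Sum>i\<in>I. \<Sum>j\<in>I. \<Sum>k\<in>I. F i j k)"
  using p_kij[of "\<lambda>x y z. F z x y" I] p_kij[of F I] by simp
lemma p_kji: "(\<Sum>i\<in>I. \<Sum>j\<in>I. \<Sum>k\<in>I. F k j i) = (\<Sum>i\<in>I. \<Sum>j\<in>I. \<Sum>k\<in>I. F i j k)"
  using p_ikj[of "\<lambda>x y z. F z y x" I] p_kij[of "\<lambda>x y z. F x z y" I] p_kij[of F I] p_ikj[of F I] by simp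

lemma pointwise:
  fixes wij wik wkj a b d :: real
  assumes "0 \<le> wij" "0 \<le> wik" "0 \<le> wkj" "wkj \<le> 1"
  shows "(wij + a*b) * (wik + a*d) * (wkj + d*b) \<le>
    wij * wik
    + (wij * wik * d^2 + wij * wik * b^2)/2
    + (wij * wkj * a^2 + wij * wkj * d^2)/2
    + (wik * wkj * a^2 + wik * wkj * b^2)/2
    + (wij * a^2 * d^2 + wij * b^2 * d^2)/2
    + (wik * a^2 * b^2 + wik * d^2 * b^2)/2
    + (wkj * d^2 * a^2 + wkj * b^2 * a^2)/2
    + a^2 * b^2 * d^2"
proof -
  have e: "(wij + a*b) * (wik + a*d) * (wkj + d*b) =
     (wij*wik)*wkj + (wij*wik)*(d*b) + (wij*wkj)*(a*d) + (wij*d^2)*(a*b)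
     + (wik*wkj)*(a*b) + (wik*b^2)*(a*d) + (wkj*a^2)*(d*b) + a^2*b^2*d^2"
    by (simp add: algebra_simps power2_eq_square)
  have 1: "(wij*wik)*wkj \<le> wij*wik" using assms mult_left_mono[of wkj 1 "wij*wik"] by simp
  have 2: "(wij*wik)*(d*b) \<le> (wij*wik)*((d^2+b^2)/2)" by (rule amgm) (use assms in simp)
  have 3: "(wij*wkj)*(a*d) \<le> (wij*wkj)*((a^2+d^2)/2)" by (rule amgm) (use assms in simp)
  have 4: "(wij*d^2)*(a*b) \<le> (wij*d^2)*((a^2+b^2)/2)" by (rule amgm) (use assms in simp)
  have 5: "(wik*wkj)*(a*b) \<le> (wik*wkj)*((a^2+b^2)/2)" by (rule amgm) (use assms in simp)
  have 6: "(wik*b^2)*(a*d) \<le> (wik*b^2)*((a^2+d^2)/2)" by (rule amgm) (use assms in simp)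
  have 7: "(wkj*a^2)*(d*b) \<le> (wkj*a^2)*((d^2+b^2)/2)" by (rule amgm) (use assms in simp)
  show ?thesis unfolding e using 1 2 3 4 5 6 7 by (simp add: algebra_simps add_divide_distrib)
qed
lemma main_bound:
  fixes w :: "nat \<Rightarrow> nat \<Rightarrow> real" and u :: "nat \<Rightarrow> real" and c T :: real
  assumes fin: "finite I" and sym: "\<And>i j. w i j = w j i" and rowc: "\<And>i. (\<Sum>j\<in>I. w i j) \<le> c"
    and wnn: "\<And>i j. 0 \<le> w i j" and w1: "\<And>i j. w i j \<le> 1"
    and T: "(\<Sum>i\<in>I. (u i)^2) \<le> T"
  shows "(\<Sum>i\<in>I. \<Sum>j\<in>I. \<Sum>k\<in>I. (w i j + u i * u j) * (w i k + u i * u k) * (w k j + u k * u j))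
     \<le> card I * c * c + 3 * c * c * T + 3 * c * T * T + T * T * T"
proof -
  define g where "g i = (u i)^2" for i
  have gnn: "0 \<le> g i" for i by (simp add: g_def)
  have gT: "(\<Sum>i\<in>I. g i) \<le> T" using T by (simp add: g_def)
  have T0: "0 \<le> T" using gT sum_nonneg[of I g] gnn by (meson order.trans)
  have c0: "0 \<le> c" using rowc[of undefined] sum_nonneg[of I "w undefined"] wnn by (meson order.trans)
  define Tp where "Tp x y z = w x y * w x z * g z" for x y z
  define Op where "Op x y z = w x y * g x * g z" for x y z
  define S where "S F = (\<Sum>i\<in>I. \<Sum>j\<in>I. \<Sum>k\<in>I. F i j k)" for F :: "nat \<Rightarrow> nat \<Rightarrow> nat \<Rightarrow> real"
  have ST: "S Tp \<le> c * c * T"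
  proof -
    have "S Tp \<le> c * c * (\<Sum>i\<in>I. g i)" unfolding S_def Tp_def by (rule tri) (use assms gnn in auto)
    also have "\<dots> \<le> c * c * T" using gT c0 by (simp add: mult_left_mono)
    finally show ?thesis .
  qed
  have SO: "S Op \<le> c * T * T" unfolding S_def Op_def by (rule one) (use assms gnn gT in auto)
  have SA0: "S (\<lambda>i j k. w i j * w i k) \<le> card I * c * c"
  proof -
    have "S (\<lambda>i j k. w i j * w i k) = (\<Sum>i\<in>I. (\<Sum>j\<in>I. w i j) * (\<Sum>k\<in>I. w i k))"
      unfolding S_def using p_ikj[of "\<lambda>i j k. w i j * w i k" I] by (simp add: sum_distrib_left sum_distrib_right mult.commute)
    also have "\<dots> \<le> (\<Sum>i\<in>I. c * c)"
      by (rule sum_mono, rule mult_mono) (use rowc c0 wnn in \<open>auto intro: sum_nonneg\<close>)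
    finally show ?thesis by simp
  qed
  have SC: "S (\<lambda>i j k. g i * g j * g k) \<le> T * T * T"
  proof -
    have "S (\<lambda>i j k. g i * g j * g k) = (\<Sum>i\<in>I. g i) * (\<Sum>i\<in>I. g i) * (\<Sum>i\<in>I. g i)"
      unfolding S_def using p_kji[of "\<lambda>i j k. g i * g j * g k" I] by (simp add: sum_distrib_left sum_distrib_right mult_ac)
    also have "\<dots> \<le> T * T * T" using gT gnn
      by (intro mult_mono) (auto intro: sum_nonneg mult_nonneg_nonneg T0)
    finally show ?thesis .
  qed
  have A1: "S (\<lambda>i j k. w i j * w i k * g k) = S Tp" unfolding Tp_def ..
  have A2: "S (\<lambda>i j k. w i j * w i k * g j) = S Tp" unfolding S_def Tp_def
    using p_ikj[of Tp I] unfolding Tp_def by (simp add: mult_ac)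
  have A3: "S (\<lambda>i j k. w i j * w k j * g i) = S Tp" unfolding S_def
    using p_jki[of Tp I] unfolding Tp_def by (simp add: sym mult_ac)
  have A4: "S (\<lambda>i j k. w i j * w k j * g k) = S Tp" unfolding S_def
    using p_jik[of Tp I] unfolding Tp_def by (simp add: sym mult_ac)
  have A5: "S (\<lambda>i j k. w i k * w k j * g i) = S Tp" unfolding S_def
    using p_kji[of Tp I] unfolding Tp_def by (simp add: sym mult_ac)
  have A6: "S (\<lambda>i j k. w i k * w k j * g j) = S Tp" unfolding S_def
    using p_kij[of Tp I] unfolding Tp_def by (simp add: sym mult_ac)
  have B1: "S (\<lambda>i j k. w i j * g i * g k) = S Op" unfolding Op_def ..
  have B2: "S (\<lambda>i j k. w i j * g j * g k) = S Op" unfolding S_def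
    using p_jik[of Op I] unfolding Op_def by (simp add: sym mult_ac)
  have B3: "S (\<lambda>i j k. w i k * g i * g j) = S Op" unfolding S_def
    using p_ikj[of Op I] unfolding Op_def by (simp add: sym mult_ac)
  have B4: "S (\<lambda>i j k. w i k * g k * g j) = S Op" unfolding S_def
    using p_kij[of Op I] unfolding Op_def by (simp add: sym mult_ac)
  have B5: "S (\<lambda>i j k. w k j * g k * g i) = S Op" unfolding S_def
    using p_kji[of Op I] unfolding Op_def by (simp add: sym mult_ac)
  have B6: "S (\<lambda>i j k. w k j * g j * g i) = S Op" unfolding S_def
    using p_jki[of Op I] unfolding Op_def by (simp add: sym mult_ac)
  have "S (\<lambda>i j k. (w i j + u i * u j) * (w i k + u i * u k) * (w k j + u k * u j)) \<le>
    S (\<lambda>i j k. w i j * w i k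
    + (w i j * w i k * g k + w i j * w i k * g j)/2
    + (w i j * w k j * g i + w i j * w k j * g k)/2
    + (w i k * w k j * g i + w i k * w k j * g j)/2
    + (w i j * g i * g k + w i j * g j * g k)/2
    + (w i k * g i * g j + w i k * g k * g j)/2
    + (w k j * g k * g i + w k j * g j * g i)/2
    + g i * g j * g k)"
    unfolding S_def g_def
    by (intro sum_mono pointwise) (use wnn w1 in auto)
  also have "\<dots> = S (\<lambda>i j k. w i j * w i k) + (S (\<lambda>i j k. w i j * w i k * g k) + S (\<lambda>i j k. w i j * w i k * g j)
    + S (\<lambda>i j k. w i j * w k j * g i) + S (\<lambda>i j k. w i j * w k j * g k)
    + S (\<lambda>i j k. w i k * w k j * g i) + S (\<lambda>i j k. w i k * w k j * g j)) / 2
    + (S (\<lambda>i j k. w i j * g i * g k) + S (\<lambda>i j k. w i j * g j * g k)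
    + S (\<lambda>i j k. w i k * g i * g j) + S (\<lambda>i j k. w i k * g k * g j)
    + S (\<lambda>i j k. w k j * g k * g i) + S (\<lambda>i j k. w k j * g j * g i)) / 2
    + S (\<lambda>i j k. g i * g j * g k)"
    unfolding S_def by (simp add: add_divide_distrib sum.distrib sum_divide_distrib)
  also have "\<dots> = S (\<lambda>i j k. w i j * w i k) + 3 * S Tp + 3 * S Op + S (\<lambda>i j k. g i * g j * g k)"
    unfolding A1 A2 A3 A4 A5 A6 B1 B2 B3 B4 B5 B6 by simp
  also have "\<dots> \<le> card I * c * c + 3 * (c * c * T) + 3 * (c * T * T) + T * T * T"
    using SA0 ST SO SC by linarith
  finally show ?thesis unfolding S_def by simp
qed
lemma geo_inj:
  fixes a :: real
  assumes "0 \<le> a" "a < 1" "finite S" "inj_on h S"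
  shows "(\<Sum>j\<in>S. a ^ h j) \<le> 1 / (1 - a)"
proof -
  have "(\<Sum>j\<in>S. a ^ h j) = (\<Sum>n\<in>h ` S. a ^ n)" using sum.reindex[OF assms(4), of "\<lambda>n. a ^ n"] by simp
  also have "\<dots> \<le> (\<Sum>n. a ^ n)"
    by (rule sum_le_suminf) (use assms in \<open>auto intro: summable_geometric\<close>)
  also have "\<dots> = 1 / (1 - a)" using suminf_geometric[of a] assms by simp
  finally show ?thesis .
qed

lemma rowsum:
  fixes a :: real
  assumes "0 \<le> a" "a < 1"
  shows "(\<Sum>j\<in>{1..p}. a ^ nat \<bar>int i - int j\<bar>) \<le> 2 / (1 - a)"
proof -
  let ?S1 = "{1..p} \<inter> {..i}" and ?S2 = "{1..p} - {..i}"
  have "(\<Sum>j\<in>{1..p}. a ^ nat \<bar>int i - int j\<bar>) = (\<Sum>j\<in>?S1. a ^ nat \<bar>int i - int j\<bar>) + (\<Sum>j\<in>?S2. a ^ nat \<bar>int i - int j\<bar>)"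
    by (rule sum.Int_Diff) simp
  also have "(\<Sum>j\<in>?S1. a ^ nat \<bar>int i - int j\<bar>) = (\<Sum>j\<in>?S1. a ^ (i - j))"
    by (rule sum.cong) (auto simp: nat_diff_distrib of_nat_diff)
  also have "(\<Sum>j\<in>?S2. a ^ nat \<bar>int i - int j\<bar>) = (\<Sum>j\<in>?S2. a ^ (j - i))"
    by (rule sum.cong) (auto simp: nat_diff_distrib of_nat_diff)
  also have "(\<Sum>j\<in>?S1. a ^ (i - j)) \<le> 1 / (1 - a)"
    by (rule geo_inj) (use assms in \<open>auto simp: inj_on_def\<close>)
  also have "(\<Sum>j\<in>?S2. a ^ (j - i)) \<le> 1 / (1 - a)"
    by (rule geo_inj) (use assms in \<open>auto simp: inj_on_def\<close>)
  finally show ?thesis by simp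
qed
lemma wcs:
  fixes w x :: "nat \<Rightarrow> real"
  assumes "\<And>j. 0 \<le> w j"
  shows "(\<Sum>j\<in>I. w j * x j)^2 \<le> (\<Sum>j\<in>I. w j) * (\<Sum>j\<in>I. w j * (x j)^2)"
proof -
  have "(\<Sum>j\<in>I. sqrt (w j) * (sqrt (w j) * x j))^2 \<le> (\<Sum>j\<in>I. (sqrt (w j))^2) * (\<Sum>j\<in>I. (sqrt (w j) * x j)^2)"
    by (rule Cauchy_Schwarz_ineq_sum)
  moreover have "\<And>j. sqrt (w j) * (sqrt (w j) * x j) = w j * x j" "\<And>j. (sqrt (w j))^2 = w j"
     "\<And>j. (sqrt (w j) * x j)^2 = w j * (x j)^2"
    using assms by (auto simp: power_mult_distrib mult.assoc[symmetric])
  ultimately show ?thesis by simp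
qed

lemma theta_sq:
  fixes \<beta> :: "nat \<Rightarrow> real" and \<rho> :: real
  assumes "summable (\<lambda>j. (\<beta> (Suc j))\<^sup>2)" "\<bar>\<rho>\<bar> < 1"
  shows "(\<Sum>k\<in>{1..p}. (theta \<beta> \<rho> p k)^2) \<le> (2 / (1 - \<bar>\<rho>\<bar>)) * (2 / (1 - \<bar>\<rho>\<bar>)) * (\<Sum>j. (\<beta> (Suc j))\<^sup>2)"
proof -
  define a where "a = \<bar>\<rho>\<bar>"
  define c where "c = 2 / (1 - a)"
  define w where "w i j = a ^ nat \<bar>int i - int j\<bar>" for i j :: nat
  have a0: "0 \<le> a" "a < 1" using assms by (auto simp: a_def)
  have wnn: "0 \<le> w i j" for i j using a0 by (simp add: w_def)
  have wsym: "w i j = w j i" for i j by (simp add: w_def abs_minus_commute)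
  have rowb: "(\<Sum>j\<in>{1..p}. w i j) \<le> c" for i unfolding w_def c_def by (rule rowsum) (use a0 in auto)
  have c0: "0 \<le> c" using a0 by (simp add: c_def)
  have pt: "(theta \<beta> \<rho> p k)^2 \<le> c * (\<Sum>j\<in>{1..p}. w k j * (\<beta> j)^2)" for k
  proof -
    have "\<bar>theta \<beta> \<rho> p k\<bar> \<le> (\<Sum>j\<in>{1..p}. w k j * \<bar>\<beta> j\<bar>)"
      unfolding theta_def w_def a_def
      by (rule order.trans[OF sum_abs]) (simp add: abs_mult power_abs mult.commute)
    then have "(theta \<beta> \<rho> p k)^2 \<le> (\<Sum>j\<in>{1..p}. w k j * \<bar>\<beta> j\<bar>)^2"
      by (metis abs_ge_zero power2_abs power_mono)
    also have "\<dots> \<le> (\<Sum>j\<in>{1..p}. w k j) * (\<Sum>j\<in>{1..p}. w k j * \<bar>\<beta> j\<bar>^2)"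
      by (rule wcs) (rule wnn)
    also have "\<dots> \<le> c * (\<Sum>j\<in>{1..p}. w k j * (\<beta> j)^2)"
      unfolding power2_abs by (rule mult_right_mono) (use rowb wnn in \<open>auto intro: sum_nonneg\<close>)
    finally show ?thesis .
  qed
  have "(\<Sum>k\<in>{1..p}. (theta \<beta> \<rho> p k)^2) \<le> (\<Sum>k\<in>{1..p}. c * (\<Sum>j\<in>{1..p}. w k j * (\<beta> j)^2))"
    by (rule sum_mono) (rule pt)
  also have "\<dots> = c * (\<Sum>k\<in>{1..p}. \<Sum>j\<in>{1..p}. w k j * (\<beta> j)^2)" by (simp add: sum_distrib_left)
  also have "\<dots> \<le> c * (c * (\<Sum>j\<in>{1..p}. (\<beta> j)^2))"
    by (rule mult_left_mono, rule row) (use wsym wnn c0 rowb in auto)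
  finally have L: "(\<Sum>k\<in>{1..p}. (theta \<beta> \<rho> p k)^2) \<le> c * (c * (\<Sum>j\<in>{1..p}. (\<beta> j)^2))" .
  have X: "(\<Sum>j\<in>{1..p}. (\<beta> j)^2) \<le> (\<Sum>j. (\<beta> (Suc j))\<^sup>2)"
  proof -
    have "(\<Sum>j\<in>{1..p}. (\<beta> j)^2) = (\<Sum>j<p. (\<beta> (Suc j))^2)"
      using sum.atLeast1_atMost_eq[of "\<lambda>j. (\<beta> j)^2" p] by simp
    also have "\<dots> \<le> (\<Sum>j. (\<beta> (Suc j))\<^sup>2)" by (rule sum_le_suminf) (use assms in auto)
    finally show ?thesis .
  qed
  have "c * (c * (\<Sum>j\<in>{1..p}. (\<beta> j)^2)) \<le> c * (c * (\<Sum>j. (\<beta> (Suc j))\<^sup>2))"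
    using X c0 by (intro mult_left_mono) auto
  with L show ?thesis unfolding c_def a_def by (simp add: mult.assoc)
qed
lemma ts_bound:
  fixes \<beta> :: "nat \<Rightarrow> real" and \<rho> :: real
  assumes "summable (\<lambda>j. (\<beta> (Suc j))\<^sup>2)" "\<bar>\<rho>\<bar> < 1"
  defines "c \<equiv> 2 / (1 - \<bar>\<rho>\<bar>)"
  defines "T \<equiv> c * c * (\<Sum>j. (\<beta> (Suc j))\<^sup>2)"
  shows "\<bar>tripleSum \<beta> \<rho> p\<bar> \<le> real p * c * c + 3 * c * c * T + 3 * c * T * T + T * T * T"
proof -
  define a where "a = \<bar>\<rho>\<bar>"
  define w where "w i j = a ^ nat \<bar>int i - int j\<bar>" for i j :: nat
  define u where "u i = \<bar>theta \<beta> \<rho> p i\<bar>" for i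
  have a0: "0 \<le> a" "a < 1" using assms by (auto simp: a_def)
  have wnn: "0 \<le> w i j" for i j using a0 by (simp add: w_def)
  have w1: "w i j \<le> 1" for i j using a0 by (simp add: w_def power_le_one)
  have wsym: "w i j = w j i" for i j by (simp add: w_def abs_minus_commute)
  have rowb: "(\<Sum>j\<in>{1..p}. w i j) \<le> c" for i unfolding w_def c_def a_def by (rule rowsum) (use assms in auto)
  have uT: "(\<Sum>i\<in>{1..p}. (u i)^2) \<le> T"
    using theta_sq[OF assms(1,2), of p] unfolding u_def T_def c_def by simp
  have fac: "\<bar>\<rho> ^ nat \<bar>int i - int j\<bar> + theta \<beta> \<rho> p i * theta \<beta> \<rho> p j\<bar> \<le> w i j + u i * u j" for i j
    unfolding w_def u_def a_def
    by (rule order.trans[OF abs_triangle_ineq]) (simp add: abs_mult power_abs)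
  have "\<bar>tripleSum \<beta> \<rho> p\<bar> \<le> (\<Sum>i\<in>{1..p}. \<Sum>j\<in>{1..p}. \<Sum>k\<in>{1..p}.
      (w i j + u i * u j) * (w i k + u i * u k) * (w k j + u k * u j))"
    unfolding tripleSum_def
  proof (rule order.trans[OF sum_abs], rule sum_mono, rule order.trans[OF sum_abs], rule sum_mono,
      rule order.trans[OF sum_abs], rule sum_mono)
    fix i j k
    have nn: "0 \<le> w x y + u x * u y" for x y using wnn[of x y] by (simp add: u_def)
    show "\<bar>(\<rho> ^ nat \<bar>int i - int j\<bar> + theta \<beta> \<rho> p i * theta \<beta> \<rho> p j) *
          (\<rho> ^ nat \<bar>int i - int k\<bar> + theta \<beta> \<rho> p i * theta \<beta> \<rho> p k) *
          (\<rho> ^ nat \<bar>int k - int j\<bar> + theta \<beta> \<rho> p k * theta \<beta> \<rho> p j)\<bar>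
       \<le> (w i j + u i * u j) * (w i k + u i * u k) * (w k j + u k * u j)"
      unfolding abs_mult
      by (intro mult_mono fac nn mult_nonneg_nonneg abs_ge_zero)
  qed
  also have "\<dots> \<le> card {1..p} * c * c + 3 * c * c * T + 3 * c * T * T + T * T * T"
    by (rule main_bound) (use wsym rowb wnn w1 uT in auto)
  finally show ?thesis by simp
qed

theorem mainTheorem15:
  fixes \<beta> :: "nat \<Rightarrow> real" and \<rho> :: real
  assumes "summable (\<lambda>j. (\<beta> (Suc j))\<^sup>2)"
    and "\<bar>\<rho>\<bar> < 1"
  shows "(\<lambda>p. \<bar>tripleSum \<beta> \<rho> p\<bar>) \<in> o[at_top](\<lambda>p. real p powr (3/2))"
proof -
  define c where "c = 2 / (1 - \<bar>\<rho>\<bar>)"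
  define T where "T = c * c * (\<Sum>j. (\<beta> (Suc j))\<^sup>2)"
  define K where "K = 3 * c * c * T + 3 * c * T * T + T * T * T"
  have b: "\<bar>tripleSum \<beta> \<rho> p\<bar> \<le> real p * c * c + K" for p
    using ts_bound[OF assms, of p] unfolding K_def T_def c_def by (simp add: add.assoc)
  have K0: "0 \<le> K"
    using b[of 0] by simp
  have "(\<lambda>p. \<bar>tripleSum \<beta> \<rho> p\<bar>) \<in> O(\<lambda>p. real p)"
  proof (rule bigoI[where c = "c * c + K"])
    show "\<forall>\<^sub>F p in at_top. norm \<bar>tripleSum \<beta> \<rho> p\<bar> \<le> (c * c + K) * norm (real p)"
      using eventually_ge_at_top[of "1::nat"]
    proof eventually_elim
      case (elim p)
      have "K \<le> K * real p" using elim K0 by (simp add: mult_le_cancel_left1)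
      then show ?case using b[of p] by (simp add: algebra_simps)
    qed
  qed
  also have "(\<lambda>p. real p) \<in> o(\<lambda>p. real p powr (3/2))" by real_asymp
  finally show ?thesis .
qed
end
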